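(* Let $\mathcal H$ be a (possibly infinite-dimensional) separable Hilbert space and let $\rho$ be a probability distribution on $(X,Y)\in\mathcal H\times\mathbb R$. Let $H=\mathbb E[X\otimes X]$ be the covariance operator, with largest eigenvalue $\lambda_{\max}$. Assume the noiseless model: there is $\theta_*\in\mathcal H$ (in particular $\|\theta_*\|_{\mathcal H}<\infty$) with $\langle\theta_*,X\rangle=Y$ $\rho$-almost surely. Assume the fourth moment condition: there is a finite constant $R\ge 0$ with $\mathbb E[\|X\|^2\,X\otimes X]\preccurlyeq R\,H$. Let $(x_t,y_t)_{t\ge0}$ be i.i.d. samples from $\rho$ and run constant step-size SGD $\theta_0=0$, $\theta_{t+1}=\theta_t-\gamma(\langle\theta_t,x_t\rangle-y_t)x_t$. Then for every $T\ge2$, with the step size $\gamma=(4R\ln T)^{-1}$, $$\mathbb E\,\mathcal R(\theta_T)\le 3R\|\theta_*\|_{\mathcal H}^2\,\frac{\ln T}{T},$$ where $\mathcal R(\theta)=\tfrac12\mathbb E_\rho(\langle\theta,X\rangle-Y)^2$ and the outer expectation is over the samples used by SGD.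
   Context: $\preccurlyeq$ denotes the Loewner order on self-adjoint operators. $\mathcal R(\theta)=\frac12(\theta-\theta_* )^\top H(\theta-\theta_* )$ in the noiseless model. *)

theory Defs
  imports "HOL-Probability.Probability"
begin

fun sgd :: "real \<Rightarrow> (nat \<Rightarrow> 'a::real_inner \<times> real) \<Rightarrow> nat \<Rightarrow> 'a" where
  "sgd \<gamma> \<omega> 0 = 0"
| "sgd \<gamma> \<omega> (Suc t) =
     sgd \<gamma> \<omega> t - (\<gamma> * (inner (sgd \<gamma> \<omega> t) (fst (\<omega> t)) - snd (\<omega> t))) *\<^sub>R fst (\<omega> t)"

definition risk :: "('a::real_inner \<times> real) measure \<Rightarrow> 'a \<Rightarrow> ennreal" where
  "risk \<rho> \<theta> = (1/2) * (\<integral>\<^sup>+ z. ennreal ((inner \<theta> (fst z) - snd z)^2) \<partial>\<rho>)"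

end

theory Submission
  imports Defs
begin


lemma LP:
  fixes F :: "nat \<Rightarrow> real" and a :: real and T :: nat
  assumes F0: "\<And>t. F t \<ge> 0" and a: "0 \<le> a" "a \<le> 1"
    and star: "\<And>k. k \<le> T \<Longrightarrow> (1-a) * (\<Sum>t\<in>{k..T}. F t) \<le> (real (T-k) + 1) * F k"
  shows "F T \<le> (\<Prod>i<T. (1 + a/(real i + 1))) * ((\<Sum>t\<in>{0..T}. F t) / (real T + 1))"
proof -
  define C where "C = (\<Sum>t\<in>{0..T}. F t) / (real T + 1)"
  have claim: "(\<Sum>t\<in>{k..T}. F t) / (real (T-k) + 1) \<le> (\<Prod>i<k. (1 + a/real (T-i))) * C" if "k \<le> T" for k
    using that
  proof (induction k)
    case 0 then show ?case by (simp add: C_def)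
  next
    case (Suc k)
    define m where "m = real (T - k)"
    have m1: "m \<ge> 1" using Suc.prems by (simp add: m_def)
    have mS: "real (T - Suc k) + 1 = m" using Suc.prems by (simp add: m_def of_nat_diff)
    define S where "S = (\<Sum>t\<in>{k..T}. F t)"
    have Ssplit: "S = F k + (\<Sum>t\<in>{Suc k..T}. F t)" unfolding S_def using Suc.prems
      by (simp add: sum.atLeast_Suc_atMost)
    have st: "(1-a) * S \<le> (m+1) * F k" using star[of k] Suc.prems by (simp add: S_def m_def)
    have IH: "S / (m+1) \<le> (\<Prod>i<k. (1 + a/real (T-i))) * C" using Suc.IH Suc.prems by (simp add: S_def m_def)
    have S0: "S \<ge> 0" unfolding S_def by (intro sum_nonneg F0)
    have "(S - F k) * (m+1) \<le> (m + a) * S" using st by (simp add: algebra_simps)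
    then have "(S - F k) / m \<le> (1 + a/m) * (S / (m+1))"
    proof -
      assume h: "(S - F k) * (m+1) \<le> (m + a) * S"
      have "(S - F k) / m = ((S - F k) * (m+1)) / (m*(m+1))" using m1
        by (intro nonzero_mult_divide_mult_cancel_right[symmetric]) auto
      also have "\<dots> \<le> ((m + a) * S) / (m*(m+1))" using h m1 by (intro divide_right_mono) auto
      also have "\<dots> = (1 + a/m) * (S / (m+1))" using m1 by (simp add: field_simps)
      finally show ?thesis .
    qed
    also have "\<dots> \<le> (1 + a/m) * ((\<Prod>i<k. (1 + a/real (T-i))) * C)"
      using IH m1 a by (intro mult_left_mono) auto
    finally have "(S - F k) / m \<le> (\<Prod>i<Suc k. (1 + a/real (T-i))) * C"
      by (simp add: m_def algebra_simps)
    then show ?case using Ssplit mS by simp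
  qed
  have "(\<Prod>i<T. (1 + a/real (T-i))) = (\<Prod>i<T. (1 + a/(real i + 1)))"
  proof -
    have "(\<Prod>i<T. (1 + a/(real i + 1))) = (\<Prod>i\<in>{0..<T}. (1 + a/(real i + 1)))" by (simp add: atLeast0LessThan)
    also have "\<dots> = (\<Prod>i\<in>{0..<T}. (1 + a/(real (T + 0 - Suc i) + 1)))" by (rule prod.atLeastLessThan_rev)
    also have "\<dots> = (\<Prod>i<T. (1 + a/real (T-i)))"
      by (intro prod.cong) (auto simp: of_nat_diff atLeast0LessThan)
    finally show ?thesis by simp
  qed
  then show ?thesis using claim[of T] by (simp add: C_def)
qed

lemma prod_bound:
  fixes a :: real assumes a: "0 \<le> a" and T: "T \<ge> 1"
  shows "(\<Prod>i<T. (1 + a/(real i + 1))) \<le> (1 + a) * exp (a * ln (real T))"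
  using T
proof (induction T rule: dec_induct)
  case base then show ?case by simp
next
  case (step n)
  have n: "real n \<ge> 1" using step.hyps by simp
  have "ln (real n / (real n + 1)) \<le> real n / (real n + 1) - 1"
    using n by (intro ln_le_minus_one) auto
  then have "ln (real n) - ln (real n + 1) \<le> - 1 / (real n + 1)"
    using n by (simp add: ln_div field_simps)
  then have h: "1 / (real n + 1) \<le> ln (real n + 1) - ln (real n)" by simp
  have "1 + a / (real n + 1) \<le> exp (a / (real n + 1))" by (rule exp_ge_add_one_self)
  also have "\<dots> \<le> exp (a * (ln (real n + 1) - ln (real n)))"
    using mult_left_mono[OF h a] by simp
  finally have e: "1 + a / (real n + 1) \<le> exp (a * (ln (real n + 1) - ln (real n)))" .
  have pos: "0 \<le> 1 + a / (real n + 1)" using a by simp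
  have "(\<Prod>i<Suc n. (1 + a/(real i + 1))) = (\<Prod>i<n. (1 + a/(real i + 1))) * (1 + a / (real n + 1))"
    by simp
  also have "\<dots> \<le> ((1 + a) * exp (a * ln (real n))) * exp (a * (ln (real n + 1) - ln (real n)))"
    using step.IH e pos a by (intro mult_mono) auto
  also have "\<dots> = (1 + a) * exp (a * ln (real (Suc n)))"
    by (simp add: mult.assoc exp_add[symmetric] algebra_simps)
  finally show ?case .
qed

lemma ln2_ge: "ln (2::real) \<ge> 1/2"
proof -
  have "ln (1/2::real) \<le> 1/2 - 1" by (rule ln_le_minus_one) auto
  then show ?thesis by (simp add: ln_div)
qed

lemma exp_quarter: "exp (1/4::real) \<le> 4/3"
proof -
  have "ln (3/4::real) \<le> 3/4 - 1" by (rule ln_le_minus_one) auto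
  then have "1/4 \<le> ln (4/3::real)" by (simp add: ln_div)
  then have h: "exp (1/4) \<le> exp (ln (4/3::real))" by (subst exp_le_cancel_iff)
  have "exp (ln (4/3::real)) = 4/3" by (rule exp_ln) simp
  then show ?thesis using h by linarith
qed



lemma enn_aff: "0 \<le> c \<Longrightarrow> 0 \<le> b \<Longrightarrow> 0 \<le> d \<Longrightarrow> ennreal (c*b + d) = ennreal c * ennreal b + ennreal d"
proof -
  assume h: "0 \<le> c" "0 \<le> b" "0 \<le> d"
  have "ennreal (c*b + d) = ennreal (c*b) + ennreal d" using h by (intro ennreal_plus) auto
  also have "ennreal (c*b) = ennreal c * ennreal b" using h by (simp add: ennreal_mult)
  finally show ?thesis .
qed

lemma os_real:
  fixes \<theta> u ts x :: "'a::real_inner" and y g :: real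
  assumes y: "y = inner ts x" and g: "g \<ge> 0"
  shows "(norm (\<theta> - (g * (inner \<theta> x - y)) *\<^sub>R x - u))\<^sup>2 + g * (inner x (\<theta> - ts))\<^sup>2
     \<le> (norm (\<theta> - u))\<^sup>2 + g * (inner x (u - ts))\<^sup>2 + g\<^sup>2 * ((norm x)\<^sup>2 * (inner x (\<theta> - ts))\<^sup>2)"
proof -
  define s where "s = inner x (\<theta> - ts)"
  define r where "r = inner x (u - ts)"
  define v where "v = \<theta> - u"
  have e1: "inner \<theta> x - y = s" unfolding s_def y by (simp add: inner_diff_right inner_commute)
  have e2: "inner v x = s - r" unfolding v_def s_def r_def by (simp add: inner_diff_right inner_diff_left inner_commute)
  have e3: "\<theta> - (g * (inner \<theta> x - y)) *\<^sub>R x - u = v - (g * s) *\<^sub>R x" unfolding v_def e1 by simp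
  have e4: "(norm (v - (g * s) *\<^sub>R x))\<^sup>2 = (norm v)\<^sup>2 - 2 * (g * s) * inner v x + (g * s)\<^sup>2 * (norm x)\<^sup>2"
    unfolding power2_norm_eq_inner by (simp add: inner_diff_left inner_diff_right inner_commute power2_eq_square algebra_simps)
  have "g * (s - r)\<^sup>2 \<ge> 0" using g by simp
  then show ?thesis unfolding e3 e4 e2 unfolding s_def[symmetric] r_def[symmetric] v_def[symmetric]
    by (simp add: power2_eq_square algebra_simps)
qed

lemma os_real_star:
  fixes \<theta> ts x :: "'a::real_inner" and y g :: real
  assumes y: "y = inner ts x"
  shows "(norm (\<theta> - (g * (inner \<theta> x - y)) *\<^sub>R x - ts))\<^sup>2 + 2 * g * (inner x (\<theta> - ts))\<^sup>2
     = (norm (\<theta> - ts))\<^sup>2 + g\<^sup>2 * ((norm x)\<^sup>2 * (inner x (\<theta> - ts))\<^sup>2)"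
proof -
  define s where "s = inner x (\<theta> - ts)"
  define v where "v = \<theta> - ts"
  have e1: "inner \<theta> x - y = s" unfolding s_def y by (simp add: inner_diff_right inner_commute)
  have e2: "inner v x = s" unfolding v_def s_def by (simp add: inner_commute)
  have e3: "\<theta> - (g * (inner \<theta> x - y)) *\<^sub>R x - ts = v - (g * s) *\<^sub>R x" unfolding v_def e1 by simp
  have e4: "(norm (v - (g * s) *\<^sub>R x))\<^sup>2 = (norm v)\<^sup>2 - 2 * (g * s) * inner v x + (g * s)\<^sup>2 * (norm x)\<^sup>2"
    unfolding power2_norm_eq_inner by (simp add: inner_diff_left inner_diff_right inner_commute power2_eq_square algebra_simps)
  have e5: "inner x (\<theta> - ts) = s" by (simp add: s_def)
  have e6: "inner x v = s" by (simp add: s_def v_def)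
  show ?thesis unfolding e3 e4 e2 e5 v_def[symmetric]
    by (simp add: power2_eq_square algebra_simps e6)
qed

lemma sgd_cong: "(\<And>i. i < t \<Longrightarrow> \<omega> i = \<omega>' i) \<Longrightarrow> sgd g \<omega> t = sgd g \<omega>' t"
  by (induction t) auto

locale sgdL =
  fixes \<rho> :: "('a::{real_inner, complete_space, second_countable_topology} \<times> real) measure"
  assumes prob: "prob_space \<rho>"
    and sets_rho: "sets \<rho> = sets borel"
begin

lemma sets_rho2: "sets \<rho> = sets (borel \<Otimes>\<^sub>M borel)"
  by (simp only: sets_rho borel_prod)

lemma meas_from_rho: "measurable \<rho> N = measurable (borel \<Otimes>\<^sub>M borel) N"
  by (rule measurable_cong_sets[OF sets_rho2 refl])

lemma meas_to_rho: "measurable N \<rho> = measurable N (borel \<Otimes>\<^sub>M borel)"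
  by (rule measurable_cong_sets[OF refl sets_rho2])

lemma meas_pair_rho: "measurable (N \<Otimes>\<^sub>M \<rho>) K = measurable (N \<Otimes>\<^sub>M (borel \<Otimes>\<^sub>M borel)) K"
  by (rule measurable_cong_sets[OF sets_pair_measure_cong[OF refl sets_rho2] refl])

lemma comp_meas:
  assumes "t \<in> J"
  shows "(\<lambda>\<omega>. \<omega> t) \<in> measurable (PiM J (\<lambda>_. \<rho>)) (borel \<Otimes>\<^sub>M borel)"
  using measurable_component_singleton[OF assms, of "\<lambda>_. \<rho>"] meas_to_rho by blast

lemma sgd_meas:
  assumes "{..<s} \<subseteq> J"
  shows "(\<lambda>\<omega>. sgd g \<omega> s) \<in> borel_measurable (PiM J (\<lambda>_. \<rho>))"
  using assms
proof (induction s)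
  case 0 then show ?case by simp
next
  case (Suc s)
  have IH[measurable]: "(\<lambda>\<omega>. sgd g \<omega> s) \<in> borel_measurable (PiM J (\<lambda>_. \<rho>))"
    using Suc.IH Suc.prems by (meson lessThan_subset_iff le_SucI order_refl subset_trans)
  have cm: "(\<lambda>\<omega>. \<omega> s) \<in> measurable (PiM J (\<lambda>_. \<rho>)) (borel \<Otimes>\<^sub>M borel)"
    using Suc.prems by (intro comp_meas) auto
  have f1: "(\<lambda>\<omega>. fst (\<omega> s)) \<in> borel_measurable (PiM J (\<lambda>_. \<rho>))"
    by (rule measurable_fst'[OF cm])
  have f2: "(\<lambda>\<omega>. snd (\<omega> s)) \<in> borel_measurable (PiM J (\<lambda>_. \<rho>))"
    by (rule measurable_snd'[OF cm])
  have "(\<lambda>\<omega>. sgd g \<omega> s - (g * (inner (sgd g \<omega> s) (fst (\<omega> s)) - snd (\<omega> s))) *\<^sub>R fst (\<omega> s))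
     \<in> borel_measurable (PiM J (\<lambda>_. \<rho>))"
    by (intro borel_measurable_diff borel_measurable_scaleR borel_measurable_times
          borel_measurable_inner borel_measurable_const IH f1 f2)
  then show ?case by simp
qed

lemma rho_meas: "f \<in> borel_measurable (borel \<Otimes>\<^sub>M borel) \<Longrightarrow> f \<in> borel_measurable \<rho>"
  by (simp add: meas_from_rho)

end

sublocale sgdL \<subseteq> P: prob_space \<rho> by (rule prob)

context sgdL begin

lemma PS: "product_prob_space (\<lambda>_::nat. \<rho>)"
  by (simp add: product_prob_space_def product_prob_space_axioms_def product_sigma_finite_def
      P.prob_space_axioms prob_space_imp_sigma_finite)

lemma indep:
  fixes J :: "nat set" and X :: "(nat \<Rightarrow> 'a \<times> real) \<Rightarrow> 'b"
  assumes J: "finite J" "t \<in> J"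
    and X: "X \<in> measurable (PiM J (\<lambda>_. \<rho>)) N"
    and Xc: "\<And>w y. X (w(t := y)) = X w"
    and gm: "case_prod h \<in> borel_measurable (N \<Otimes>\<^sub>M \<rho>)"
  shows "(\<integral>\<^sup>+w. h (X w) (w t) \<partial>PiM J (\<lambda>_. \<rho>)) = (\<integral>\<^sup>+w. (\<integral>\<^sup>+z. h (X w) z \<partial>\<rho>) \<partial>PiM J (\<lambda>_. \<rho>))"
proof -
  interpret PS: product_prob_space "\<lambda>_::nat. \<rho>" by (rule PS)
  define I where "I = J - {t}"
  have Jeq: "J = insert t I" and I: "finite I" "t \<notin> I" using J by (auto simp: I_def)
  have m1: "(\<lambda>w. h (X w) (w t)) \<in> borel_measurable (PiM J (\<lambda>_. \<rho>))"
    using measurable_compose[OF measurable_Pair[OF X measurable_component_singleton[OF J(2)]] gm] by simp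
  have m2: "(\<lambda>w. (\<integral>\<^sup>+z. h (X w) z \<partial>\<rho>)) \<in> borel_measurable (PiM J (\<lambda>_. \<rho>))"
    using measurable_compose[OF X P.borel_measurable_nn_integral[OF gm]] by simp
  have "(\<integral>\<^sup>+w. h (X w) (w t) \<partial>PiM J (\<lambda>_. \<rho>))
      = (\<integral>\<^sup>+w. (\<integral>\<^sup>+y. h (X (w(t := y))) ((w(t := y)) t) \<partial>\<rho>) \<partial>PiM I (\<lambda>_. \<rho>))"
    using m1 unfolding Jeq by (rule PS.product_nn_integral_insert[OF I])
  also have "\<dots> = (\<integral>\<^sup>+w. (\<integral>\<^sup>+y. (\<integral>\<^sup>+z. h (X (w(t := y))) z \<partial>\<rho>) \<partial>\<rho>) \<partial>PiM I (\<lambda>_. \<rho>))"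
    by (simp add: Xc P.emeasure_space_1)
  also have "\<dots> = (\<integral>\<^sup>+w. (\<integral>\<^sup>+z. h (X w) z \<partial>\<rho>) \<partial>PiM J (\<lambda>_. \<rho>))"
    using m2 unfolding Jeq by (rule PS.product_nn_integral_insert[OF I, symmetric])
  finally show ?thesis .
qed

end

locale sgdM = sgdL +
  fixes ts :: 'a and R g :: real
  assumes cov: "\<And>v. (\<integral>\<^sup>+ z. ennreal ((inner (fst z) v)^2) \<partial>\<rho>) < \<infinity>"
    and noiseless: "AE z in \<rho>. inner ts (fst z) = snd z"
    and Rpos: "R > 0"
    and fourth: "\<And>v. (\<integral>\<^sup>+ z. ennreal ((norm (fst z))^2 * (inner (fst z) v)^2) \<partial>\<rho>)
                              \<le> ennreal R * (\<integral>\<^sup>+ z. ennreal ((inner (fst z) v)^2) \<partial>\<rho>)"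
    and gpos: "g \<ge> 0"
begin

definition Q :: "'a \<Rightarrow> ennreal" where
  "Q \<theta> = (\<integral>\<^sup>+ z. ennreal ((inner (fst z) (\<theta> - ts))^2) \<partial>\<rho>)"

lemma cov_bound: "(\<integral>\<^sup>+ z. ennreal ((inner (fst z) w)^2) \<partial>\<rho>) \<le> ennreal (R * (norm w)\<^sup>2)"
proof (cases "w = 0")
  case True then show ?thesis by simp
next
  case False
  define t where "t = R * (norm w)\<^sup>2"
  have tpos: "t > 0" using False Rpos by (simp add: t_def)
  define q where "q = (\<integral>\<^sup>+ z. ennreal ((inner (fst z) w)^2) \<partial>\<rho>)"
  obtain q' where q': "q = ennreal q'" "q' \<ge> 0" using cov[of w] unfolding q_def[symmetric]
    by (cases q) auto
  have pw: "(inner x w)\<^sup>2 \<le> (1/(2*R)) * ((norm x)\<^sup>2 * (inner x w)\<^sup>2) + t/2" for x :: 'a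
  proof -
    define a where "a = (inner x w)\<^sup>2"
    have a0: "a \<ge> 0" by (simp add: a_def)
    have "\<bar>inner x w\<bar> \<le> norm x * norm w" by (rule Cauchy_Schwarz_ineq2)
    then have "a \<le> (norm x * norm w)\<^sup>2" unfolding a_def
      by (metis abs_ge_zero power2_abs power_mono)
    then have h1: "a * a \<le> (norm x)\<^sup>2 * (norm w)\<^sup>2 * a" using a0
      by (simp add: mult_right_mono power_mult_distrib)
    have h2: "2 * t * a \<le> a * a + t * t" using sum_squares_ge_zero[of "a - t" 0]
      by (simp add: algebra_simps power2_eq_square)
    have "2 * t * a \<le> (norm x)\<^sup>2 * (norm w)\<^sup>2 * a + t * t" using h1 h2 by linarith
    then have "2 * t * a \<le> t * ((norm x)\<^sup>2 * a / R) + t * t"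
      using Rpos by (simp add: t_def field_simps)
    then have "t * (2 * a) \<le> t * ((norm x)\<^sup>2 * a / R + t)"
      by (simp add: algebra_simps)
    then have "2 * a \<le> (norm x)\<^sup>2 * a / R + t" using tpos
      by (meson mult_left_le_imp_le)
    then show ?thesis unfolding a_def[symmetric] using Rpos by (simp add: field_simps)
  qed
  have m1[measurable]: "(\<lambda>z. ennreal ((inner (fst z) w)^2)) \<in> borel_measurable \<rho>"
    by (rule rho_meas) measurable
  have m2[measurable]: "(\<lambda>z. ennreal ((norm (fst z))^2 * (inner (fst z) w)^2)) \<in> borel_measurable \<rho>"
    by (rule rho_meas) measurable
  have "q \<le> (\<integral>\<^sup>+ z. ennreal (1/(2*R)) * ennreal ((norm (fst z))^2 * (inner (fst z) w)^2) + ennreal (t/2) \<partial>\<rho>)"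
    unfolding q_def
  proof (intro nn_integral_mono)
    fix z :: "'a \<times> real"
    have "ennreal ((inner (fst z) w)^2) \<le> ennreal ((1/(2*R)) * ((norm (fst z))^2 * (inner (fst z) w)^2) + t/2)"
      using pw by (rule ennreal_leI)
    also have "\<dots> = ennreal (1/(2*R)) * ennreal ((norm (fst z))^2 * (inner (fst z) w)^2) + ennreal (t/2)"
      using Rpos tpos by (intro enn_aff) auto
    finally show "ennreal ((inner (fst z) w)^2) \<le> \<dots>" .
  qed
  also have "\<dots> = ennreal (1/(2*R)) * (\<integral>\<^sup>+ z. ennreal ((norm (fst z))^2 * (inner (fst z) w)^2) \<partial>\<rho>) + ennreal (t/2)"
    by (simp add: nn_integral_add nn_integral_cmult[OF m2] P.emeasure_space_1)
  also have "\<dots> \<le> ennreal (1/(2*R)) * (ennreal R * q) + ennreal (t/2)"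
    unfolding q_def by (intro add_mono mult_left_mono fourth) auto
  also have "\<dots> = ennreal (q'/2 + t/2)"
    using Rpos q' tpos by (simp add: ennreal_mult''[symmetric] ennreal_plus[symmetric] del: ennreal_plus)
  finally have "ennreal q' \<le> ennreal (q'/2 + t/2)" using q' by simp
  then have "q' \<le> q'/2 + t/2" using q' tpos by (subst (asm) ennreal_le_iff) auto
  then have "q' \<le> t" by simp
  then show ?thesis using q' unfolding q_def t_def by simp
qed


lemma Q_bound: "Q \<theta> \<le> ennreal (R * (norm (\<theta> - ts))\<^sup>2)"
  unfolding Q_def by (rule cov_bound)

lemma Q_fin: "Q \<theta> < \<infinity>"
  using Q_bound[of \<theta>] by (simp add: le_less_trans)

lemma risk_Q: "risk \<rho> \<theta> = (1/2) * Q \<theta>"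
proof -
  have "(\<integral>\<^sup>+ z. ennreal ((inner \<theta> (fst z) - snd z)^2) \<partial>\<rho>) = Q \<theta>"
    unfolding Q_def
  proof (rule nn_integral_cong_AE)
    show "AE z in \<rho>. ennreal ((inner \<theta> (fst z) - snd z)^2) = ennreal ((inner (fst z) (\<theta> - ts))^2)"
      using noiseless by eventually_elim (simp add: inner_diff_right inner_commute)
  qed
  then show ?thesis unfolding risk_def by simp
qed

lemma Q_meas[measurable]: "Q \<in> borel_measurable borel"
proof -
  have "(\<lambda>(\<theta>::'a, z). ennreal ((inner (fst z) (\<theta> - ts))^2)) \<in> borel_measurable (borel \<Otimes>\<^sub>M \<rho>)"
    unfolding meas_pair_rho by measurable
  then have "(\<lambda>\<theta>::'a. \<integral>\<^sup>+ z. ennreal ((inner (fst z) (\<theta> - ts))^2) \<partial>\<rho>) \<in> borel_measurable borel"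
    by (intro P.borel_measurable_nn_integral) simp
  then show ?thesis unfolding Q_def[abs_def] .
qed

lemma OS:
  "(\<integral>\<^sup>+z. ennreal ((norm (\<theta> - (g * (inner \<theta> (fst z) - snd z)) *\<^sub>R fst z - u))\<^sup>2) \<partial>\<rho>) + ennreal g * Q \<theta>
   \<le> ennreal ((norm (\<theta> - u))\<^sup>2) + ennreal g * Q u + ennreal (g\<^sup>2) * (ennreal R * Q \<theta>)"
proof -
  let ?N = "\<lambda>z. (norm (\<theta> - (g * (inner \<theta> (fst z) - snd z)) *\<^sub>R fst z - u))\<^sup>2"
  let ?s = "\<lambda>z. (inner (fst z) (\<theta> - ts))\<^sup>2"
  let ?r = "\<lambda>z. (inner (fst z) (u - ts))\<^sup>2"
  let ?B = "\<lambda>z. (norm (fst z))\<^sup>2 * (inner (fst z) (\<theta> - ts))\<^sup>2"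
  have mN[measurable]: "(\<lambda>z. ennreal (?N z)) \<in> borel_measurable \<rho>" by (rule rho_meas) measurable
  have ms[measurable]: "(\<lambda>z. ennreal (?s z)) \<in> borel_measurable \<rho>" by (rule rho_meas) measurable
  have mr[measurable]: "(\<lambda>z. ennreal (?r z)) \<in> borel_measurable \<rho>" by (rule rho_meas) measurable
  have mB[measurable]: "(\<lambda>z. ennreal (?B z)) \<in> borel_measurable \<rho>" by (rule rho_meas) measurable
  have "(\<integral>\<^sup>+z. ennreal (?N z) \<partial>\<rho>) + ennreal g * Q \<theta> = (\<integral>\<^sup>+z. ennreal (?N z) + ennreal g * ennreal (?s z) \<partial>\<rho>)"
  proof -
    have "(\<lambda>z. ennreal g * ennreal (?s z)) \<in> borel_measurable \<rho>" by measurable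
    then show ?thesis unfolding Q_def by (simp add: nn_integral_add[OF mN] nn_integral_cmult[OF ms])
  qed
  also have "\<dots> \<le> (\<integral>\<^sup>+z. ennreal ((norm (\<theta> - u))\<^sup>2) + ennreal g * ennreal (?r z) + ennreal (g\<^sup>2) * ennreal (?B z) \<partial>\<rho>)"
  proof (rule nn_integral_mono_AE)
    show "AE z in \<rho>. ennreal (?N z) + ennreal g * ennreal (?s z) \<le> ennreal ((norm (\<theta> - u))\<^sup>2) + ennreal g * ennreal (?r z) + ennreal (g\<^sup>2) * ennreal (?B z)"
      using noiseless
    proof eventually_elim
      case (elim z)
      have "?N z + g * ?s z \<le> (norm (\<theta> - u))\<^sup>2 + g * ?r z + g\<^sup>2 * ?B z"
        by (rule os_real) (use elim gpos in auto)
      then have "ennreal (?N z + g * ?s z) \<le> ennreal ((norm (\<theta> - u))\<^sup>2 + g * ?r z + g\<^sup>2 * ?B z)"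
        by (rule ennreal_leI)
      then show ?case using gpos by (simp add: ennreal_plus ennreal_mult)
    qed
  qed
  also have "\<dots> = ennreal ((norm (\<theta> - u))\<^sup>2) + ennreal g * Q u + ennreal (g\<^sup>2) * (\<integral>\<^sup>+z. ennreal (?B z) \<partial>\<rho>)"
    unfolding Q_def by (simp add: nn_integral_add nn_integral_cmult[OF mr] nn_integral_cmult[OF mB] P.emeasure_space_1)
  also have "\<dots> \<le> ennreal ((norm (\<theta> - u))\<^sup>2) + ennreal g * Q u + ennreal (g\<^sup>2) * (ennreal R * Q \<theta>)"
    unfolding Q_def by (intro add_mono mult_left_mono fourth) auto
  finally show ?thesis .
qed

lemma OS_star:
  "(\<integral>\<^sup>+z. ennreal ((norm (\<theta> - (g * (inner \<theta> (fst z) - snd z)) *\<^sub>R fst z - ts))\<^sup>2) \<partial>\<rho>) + ennreal (2*g) * Q \<theta>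
   \<le> ennreal ((norm (\<theta> - ts))\<^sup>2) + ennreal (g\<^sup>2) * (ennreal R * Q \<theta>)"
proof -
  let ?N = "\<lambda>z. (norm (\<theta> - (g * (inner \<theta> (fst z) - snd z)) *\<^sub>R fst z - ts))\<^sup>2"
  let ?s = "\<lambda>z. (inner (fst z) (\<theta> - ts))\<^sup>2"
  let ?B = "\<lambda>z. (norm (fst z))\<^sup>2 * (inner (fst z) (\<theta> - ts))\<^sup>2"
  have mN[measurable]: "(\<lambda>z. ennreal (?N z)) \<in> borel_measurable \<rho>" by (rule rho_meas) measurable
  have ms[measurable]: "(\<lambda>z. ennreal (?s z)) \<in> borel_measurable \<rho>" by (rule rho_meas) measurable
  have mB[measurable]: "(\<lambda>z. ennreal (?B z)) \<in> borel_measurable \<rho>" by (rule rho_meas) measurable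
  have "(\<integral>\<^sup>+z. ennreal (?N z) \<partial>\<rho>) + ennreal (2*g) * Q \<theta> = (\<integral>\<^sup>+z. ennreal (?N z) + ennreal (2*g) * ennreal (?s z) \<partial>\<rho>)"
  proof -
    have "(\<lambda>z. ennreal (2*g) * ennreal (?s z)) \<in> borel_measurable \<rho>" by measurable
    then show ?thesis unfolding Q_def by (simp add: nn_integral_add[OF mN] nn_integral_cmult[OF ms])
  qed
  also have "\<dots> \<le> (\<integral>\<^sup>+z. ennreal ((norm (\<theta> - ts))\<^sup>2) + ennreal (g\<^sup>2) * ennreal (?B z) \<partial>\<rho>)"
  proof (rule nn_integral_mono_AE)
    show "AE z in \<rho>. ennreal (?N z) + ennreal (2*g) * ennreal (?s z) \<le> ennreal ((norm (\<theta> - ts))\<^sup>2) + ennreal (g\<^sup>2) * ennreal (?B z)"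
      using noiseless
    proof eventually_elim
      case (elim z)
      have "?N z + 2 * g * ?s z = (norm (\<theta> - ts))\<^sup>2 + g\<^sup>2 * ?B z"
        by (rule os_real_star) (use elim in auto)
      then have "ennreal (?N z + (2 * g) * ?s z) \<le> ennreal ((norm (\<theta> - ts))\<^sup>2 + g\<^sup>2 * ?B z)"
        by simp
      then show ?case using gpos by (simp add: ennreal_plus ennreal_mult)
    qed
  qed
  also have "\<dots> = ennreal ((norm (\<theta> - ts))\<^sup>2) + ennreal (g\<^sup>2) * (\<integral>\<^sup>+z. ennreal (?B z) \<partial>\<rho>)"
    by (simp add: nn_integral_add nn_integral_cmult[OF mB] P.emeasure_space_1)
  also have "\<dots> \<le> ennreal ((norm (\<theta> - ts))\<^sup>2) + ennreal (g\<^sup>2) * (ennreal R * Q \<theta>)"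
    unfolding Q_def by (intro add_mono mult_left_mono fourth) auto
  finally show ?thesis .
qed


abbreviation "MM T \<equiv> PiM {..<T} (\<lambda>_::nat. \<rho>)"

definition EQ where "EQ T t = (\<integral>\<^sup>+w. Q (sgd g w t) \<partial>MM T)"
definition ED where "ED T k t = (\<integral>\<^sup>+w. ennreal ((norm (sgd g w t - sgd g w k))\<^sup>2) \<partial>MM T)"
definition EE where "EE T t = (\<integral>\<^sup>+w. ennreal ((norm (sgd g w t - ts))\<^sup>2) \<partial>MM T)"

lemma th_meas[measurable]: "t \<le> T \<Longrightarrow> (\<lambda>w. sgd g w t) \<in> borel_measurable (MM T)"
  by (rule sgd_meas) auto

lemma h_meas: "(\<lambda>(p, z). ennreal ((norm (fst p - (g * (inner (fst p) (fst z) - snd z)) *\<^sub>R fst z - snd p))\<^sup>2))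
   \<in> borel_measurable ((borel \<Otimes>\<^sub>M borel) \<Otimes>\<^sub>M \<rho>)"
  unfolding meas_pair_rho by measurable

lemma h_meas1: "(\<lambda>(p::'a, z). ennreal ((norm (p - (g * (inner p (fst z) - snd z)) *\<^sub>R fst z - ts))\<^sup>2))
   \<in> borel_measurable (borel \<Otimes>\<^sub>M \<rho>)"
  unfolding meas_pair_rho by measurable

lemma A1:
  assumes "t < T" "k \<le> t"
  shows "ED T k (Suc t) + ennreal g * EQ T t \<le> ED T k t + ennreal g * EQ T k + ennreal (g\<^sup>2) * (ennreal R * EQ T t)"
proof -
  define h where "h = (\<lambda>(p::'a\<times>'a) (z::'a\<times>real). ennreal ((norm (fst p - (g * (inner (fst p) (fst z) - snd z)) *\<^sub>R fst z - snd p))\<^sup>2))"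
  define X :: "(nat \<Rightarrow> 'a \<times> real) \<Rightarrow> 'a \<times> 'a" where "X = (\<lambda>w. (sgd g w t, sgd g w k))"
  have mt[measurable]: "(\<lambda>w. sgd g w t) \<in> borel_measurable (MM T)" using assms by (intro th_meas) auto
  have mk[measurable]: "(\<lambda>w. sgd g w k) \<in> borel_measurable (MM T)" using assms by (intro th_meas) auto
  have mX: "X \<in> measurable (MM T) (borel \<Otimes>\<^sub>M borel)" unfolding X_def by measurable
  have gm: "case_prod h \<in> borel_measurable ((borel \<Otimes>\<^sub>M borel) \<Otimes>\<^sub>M \<rho>)"
    unfolding h_def using h_meas by (simp add: case_prod_beta')
  have Xc: "X (w(t := y)) = X w" for w y
    unfolding X_def using assms by (auto intro!: sgd_cong)
  have mI: "(\<lambda>w. \<integral>\<^sup>+z. h (X w) z \<partial>\<rho>) \<in> borel_measurable (MM T)"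
    using measurable_compose[OF mX P.borel_measurable_nn_integral[OF gm]] by simp
  have mD: "(\<lambda>w. ennreal ((norm (sgd g w t - sgd g w k))\<^sup>2)) \<in> borel_measurable (MM T)" by measurable
  have mQt: "(\<lambda>w. Q (sgd g w t)) \<in> borel_measurable (MM T)" by measurable
  have mQk: "(\<lambda>w. Q (sgd g w k)) \<in> borel_measurable (MM T)" by measurable
  have "ED T k (Suc t) = (\<integral>\<^sup>+w. h (X w) (w t) \<partial>MM T)"
    unfolding ED_def h_def X_def by simp
  also have "\<dots> = (\<integral>\<^sup>+w. (\<integral>\<^sup>+z. h (X w) z \<partial>\<rho>) \<partial>MM T)"
    by (rule indep[OF _ _ mX Xc gm]) (use assms in auto)
  finally have e1: "ED T k (Suc t) = (\<integral>\<^sup>+w. (\<integral>\<^sup>+z. h (X w) z \<partial>\<rho>) \<partial>MM T)" .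
  have "ED T k (Suc t) + ennreal g * EQ T t = (\<integral>\<^sup>+w. (\<integral>\<^sup>+z. h (X w) z \<partial>\<rho>) + ennreal g * Q (sgd g w t) \<partial>MM T)"
    unfolding e1 EQ_def using mI mQt by (simp add: nn_integral_add nn_integral_cmult)
  also have "\<dots> \<le> (\<integral>\<^sup>+w. ennreal ((norm (sgd g w t - sgd g w k))\<^sup>2) + ennreal g * Q (sgd g w k)
        + ennreal (g\<^sup>2) * (ennreal R * Q (sgd g w t)) \<partial>MM T)"
    by (intro nn_integral_mono) (simp add: h_def X_def OS)
  also have "\<dots> = ED T k t + ennreal g * EQ T k + ennreal (g\<^sup>2) * (ennreal R * EQ T t)"
    unfolding ED_def EQ_def using mD mQt mQk by (simp add: nn_integral_add nn_integral_cmult)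
  finally show ?thesis .
qed


lemma A2:
  assumes "t < T"
  shows "EE T (Suc t) + ennreal (2*g) * EQ T t \<le> EE T t + ennreal (g\<^sup>2) * (ennreal R * EQ T t)"
proof -
  define h where "h = (\<lambda>(p::'a) (z::'a\<times>real). ennreal ((norm (p - (g * (inner p (fst z) - snd z)) *\<^sub>R fst z - ts))\<^sup>2))"
  define X :: "(nat \<Rightarrow> 'a \<times> real) \<Rightarrow> 'a" where "X = (\<lambda>w. sgd g w t)"
  have mt[measurable]: "(\<lambda>w. sgd g w t) \<in> borel_measurable (MM T)" using assms by (intro th_meas) auto
  have mX: "X \<in> measurable (MM T) borel" unfolding X_def by measurable
  have gm: "case_prod h \<in> borel_measurable (borel \<Otimes>\<^sub>M \<rho>)"
    unfolding h_def using h_meas1 by (simp add: case_prod_beta')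
  have Xc: "X (w(t := y)) = X w" for w y
    unfolding X_def using assms by (auto intro!: sgd_cong)
  have mI: "(\<lambda>w. \<integral>\<^sup>+z. h (X w) z \<partial>\<rho>) \<in> borel_measurable (MM T)"
    using measurable_compose[OF mX P.borel_measurable_nn_integral[OF gm]] by simp
  have mD: "(\<lambda>w. ennreal ((norm (sgd g w t - ts))\<^sup>2)) \<in> borel_measurable (MM T)" by measurable
  have mQt: "(\<lambda>w. Q (sgd g w t)) \<in> borel_measurable (MM T)" by measurable
  have "EE T (Suc t) = (\<integral>\<^sup>+w. h (X w) (w t) \<partial>MM T)"
    unfolding EE_def h_def X_def by simp
  also have "\<dots> = (\<integral>\<^sup>+w. (\<integral>\<^sup>+z. h (X w) z \<partial>\<rho>) \<partial>MM T)"
    by (rule indep[OF _ _ mX Xc gm]) (use assms in auto)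
  finally have e1: "EE T (Suc t) = (\<integral>\<^sup>+w. (\<integral>\<^sup>+z. h (X w) z \<partial>\<rho>) \<partial>MM T)" .
  have "EE T (Suc t) + ennreal (2*g) * EQ T t = (\<integral>\<^sup>+w. (\<integral>\<^sup>+z. h (X w) z \<partial>\<rho>) + ennreal (2*g) * Q (sgd g w t) \<partial>MM T)"
    unfolding e1 EQ_def using mI mQt by (simp add: nn_integral_add nn_integral_cmult)
  also have "\<dots> \<le> (\<integral>\<^sup>+w. ennreal ((norm (sgd g w t - ts))\<^sup>2) + ennreal (g\<^sup>2) * (ennreal R * Q (sgd g w t)) \<partial>MM T)"
    by (intro nn_integral_mono) (simp add: h_def X_def OS_star)
  also have "\<dots> = EE T t + ennreal (g\<^sup>2) * (ennreal R * EQ T t)"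
    unfolding EE_def EQ_def using mD mQt by (simp add: nn_integral_add nn_integral_cmult)
  finally show ?thesis .
qed

lemma A3:
  assumes "k \<le> T"
  shows "ennreal g * EQ T T \<le> ED T k T + ennreal g * EQ T k + ennreal (g\<^sup>2) * (ennreal R * EQ T T)"
proof -
  have mt[measurable]: "(\<lambda>w. sgd g w T) \<in> borel_measurable (MM T)" by (intro th_meas) auto
  have mk[measurable]: "(\<lambda>w. sgd g w k) \<in> borel_measurable (MM T)" using assms by (intro th_meas) auto
  have mD: "(\<lambda>w. ennreal ((norm (sgd g w T - sgd g w k))\<^sup>2)) \<in> borel_measurable (MM T)" by measurable
  have mQt: "(\<lambda>w. Q (sgd g w T)) \<in> borel_measurable (MM T)" by measurable
  have mQk: "(\<lambda>w. Q (sgd g w k)) \<in> borel_measurable (MM T)" by measurable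
  have pw: "ennreal g * Q \<theta> \<le> ennreal ((norm (\<theta> - u))\<^sup>2) + ennreal g * Q u + ennreal (g\<^sup>2) * (ennreal R * Q \<theta>)" for \<theta> u
    by (rule order_trans[OF _ OS[of \<theta> u]]) simp
  have "ennreal g * EQ T T = (\<integral>\<^sup>+w. ennreal g * Q (sgd g w T) \<partial>MM T)"
    unfolding EQ_def using mQt by (simp add: nn_integral_cmult)
  also have "\<dots> \<le> (\<integral>\<^sup>+w. ennreal ((norm (sgd g w T - sgd g w k))\<^sup>2) + ennreal g * Q (sgd g w k)
        + ennreal (g\<^sup>2) * (ennreal R * Q (sgd g w T)) \<partial>MM T)"
    by (intro nn_integral_mono pw)
  also have "\<dots> = ED T k T + ennreal g * EQ T k + ennreal (g\<^sup>2) * (ennreal R * EQ T T)"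
    unfolding ED_def EQ_def using mD mQt mQk by (simp add: nn_integral_add nn_integral_cmult)
  finally show ?thesis .
qed

lemma A4:
  shows "ennreal (2*g) * EQ T T \<le> EE T T + ennreal (g\<^sup>2) * (ennreal R * EQ T T)"
proof -
  have mt[measurable]: "(\<lambda>w. sgd g w T) \<in> borel_measurable (MM T)" by (intro th_meas) auto
  have mD: "(\<lambda>w. ennreal ((norm (sgd g w T - ts))\<^sup>2)) \<in> borel_measurable (MM T)" by measurable
  have mQt: "(\<lambda>w. Q (sgd g w T)) \<in> borel_measurable (MM T)" by measurable
  have pw: "ennreal (2*g) * Q \<theta> \<le> ennreal ((norm (\<theta> - ts))\<^sup>2) + ennreal (g\<^sup>2) * (ennreal R * Q \<theta>)" for \<theta>
    by (rule order_trans[OF _ OS_star[of \<theta>]]) simp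
  have "ennreal (2*g) * EQ T T = (\<integral>\<^sup>+w. ennreal (2*g) * Q (sgd g w T) \<partial>MM T)"
    unfolding EQ_def using mQt by (simp add: nn_integral_cmult)
  also have "\<dots> \<le> (\<integral>\<^sup>+w. ennreal ((norm (sgd g w T - ts))\<^sup>2) + ennreal (g\<^sup>2) * (ennreal R * Q (sgd g w T)) \<partial>MM T)"
    by (intro nn_integral_mono pw)
  also have "\<dots> = EE T T + ennreal (g\<^sup>2) * (ennreal R * EQ T T)"
    unfolding EE_def EQ_def using mD mQt by (simp add: nn_integral_add nn_integral_cmult)
  finally show ?thesis .
qed

lemma EQ_le: assumes "t \<le> T" shows "EQ T t \<le> ennreal R * EE T t"
proof -
  have mt[measurable]: "(\<lambda>w. sgd g w t) \<in> borel_measurable (MM T)" using assms by (intro th_meas) auto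
  have mD: "(\<lambda>w. ennreal ((norm (sgd g w t - ts))\<^sup>2)) \<in> borel_measurable (MM T)" by measurable
  have "EQ T t \<le> (\<integral>\<^sup>+w. ennreal R * ennreal ((norm (sgd g w t - ts))\<^sup>2) \<partial>MM T)"
    unfolding EQ_def using Q_bound Rpos by (intro nn_integral_mono) (simp add: ennreal_mult)
  also have "\<dots> = ennreal R * EE T t" unfolding EE_def using mD by (simp add: nn_integral_cmult)
  finally show ?thesis .
qed

lemma EE0: "EE T 0 = ennreal ((norm ts)\<^sup>2)"
proof -
  interpret PP: prob_space "MM T" by (rule prob_space_PiM) (simp add: P.prob_space_axioms)
  show ?thesis unfolding EE_def by (simp add: PP.emeasure_space_1)
qed

lemma EE_fin: "t \<le> T \<Longrightarrow> EE T t < \<infinity>"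
proof (induction t)
  case 0 then show ?case by (simp add: EE0)
next
  case (Suc t)
  have "EE T (Suc t) \<le> EE T (Suc t) + ennreal (2*g) * EQ T t" by simp
  also have "\<dots> \<le> EE T t + ennreal (g\<^sup>2) * (ennreal R * EQ T t)" by (rule A2) (use Suc.prems in simp)
  also have "\<dots> \<le> EE T t + ennreal (g\<^sup>2) * (ennreal R * (ennreal R * EE T t))"
    using EQ_le[of t T] Suc.prems by (intro add_left_mono mult_left_mono) auto
  also have "\<dots> < \<infinity>" using Suc by (simp add: ennreal_mult_less_top)
  finally show ?case .
qed

lemma EQ_fin: "t \<le> T \<Longrightarrow> EQ T t < \<infinity>"
  using EQ_le[of t T] EE_fin[of t T] by (simp add: ennreal_mult_less_top le_less_trans)

lemma norm_tri2: "(norm (a - b))\<^sup>2 \<le> 2 * (norm (a - c))\<^sup>2 + 2 * (norm (b - c))\<^sup>2" for a b c :: 'a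
proof -
  have "norm (a - b) \<le> norm (a - c) + norm (b - c)" using norm_triangle_ineq4[of "a - c" "b - c"] by simp
  then have "(norm (a - b))\<^sup>2 \<le> (norm (a - c) + norm (b - c))\<^sup>2" by (simp add: power_mono)
  also have "\<dots> \<le> 2 * (norm (a - c))\<^sup>2 + 2 * (norm (b - c))\<^sup>2"
    using sum_squares_ge_zero[of "norm (a-c) - norm (b-c)" 0] by (simp add: power2_eq_square algebra_simps)
  finally show ?thesis .
qed

lemma ED_fin: assumes "k \<le> T" "t \<le> T" shows "ED T k t < \<infinity>"
proof -
  have mt[measurable]: "(\<lambda>w. sgd g w t) \<in> borel_measurable (MM T)" using assms by (intro th_meas) auto
  have mk[measurable]: "(\<lambda>w. sgd g w k) \<in> borel_measurable (MM T)" using assms by (intro th_meas) auto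
  have m1: "(\<lambda>w. ennreal ((norm (sgd g w t - ts))\<^sup>2)) \<in> borel_measurable (MM T)" by measurable
  have m2: "(\<lambda>w. ennreal ((norm (sgd g w k - ts))\<^sup>2)) \<in> borel_measurable (MM T)" by measurable
  have "ED T k t \<le> (\<integral>\<^sup>+w. 2 * ennreal ((norm (sgd g w t - ts))\<^sup>2) + 2 * ennreal ((norm (sgd g w k - ts))\<^sup>2) \<partial>MM T)"
    unfolding ED_def
  proof (intro nn_integral_mono)
    fix w
    have "ennreal ((norm (sgd g w t - sgd g w k))\<^sup>2) \<le> ennreal (2 * (norm (sgd g w t - ts))\<^sup>2 + 2 * (norm (sgd g w k - ts))\<^sup>2)"
      by (intro ennreal_leI norm_tri2)
    then show "ennreal ((norm (sgd g w t - sgd g w k))\<^sup>2) \<le> 2 * ennreal ((norm (sgd g w t - ts))\<^sup>2) + 2 * ennreal ((norm (sgd g w k - ts))\<^sup>2)"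
      by (simp add: ennreal_plus ennreal_mult)
  qed
  also have "\<dots> = 2 * EE T t + 2 * EE T k"
    unfolding EE_def using m1 m2 by (simp add: nn_integral_add nn_integral_cmult)
  also have "\<dots> < \<infinity>" using EE_fin assms by (simp add: ennreal_mult_less_top)
  finally show ?thesis .
qed


lemma main_bound:
  assumes gp: "g > 0" and a1: "g * R \<le> 1"
  shows "EQ T T \<le> ennreal ((\<Prod>i<T. (1 + (g*R)/(real i + 1))) * ((norm ts)\<^sup>2 / (g * (2 - g*R))) / (real T + 1))"
proof -
  define a where "a = g * R"
  have a0: "0 \<le> a" using gp Rpos by (simp add: a_def)
  define F where "F t = enn2real (EQ T t)" for t
  define D where "D k t = enn2real (ED T k t)" for k t
  define E where "E t = enn2real (EE T t)" for t
  have eF: "EQ T t = ennreal (F t)" if "t \<le> T" for t using EQ_fin[OF that] by (simp add: F_def)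
  have eD: "ED T k t = ennreal (D k t)" if "k \<le> T" "t \<le> T" for k t using ED_fin[OF that] by (simp add: D_def)
  have eE: "EE T t = ennreal (E t)" if "t \<le> T" for t using EE_fin[OF that] by (simp add: E_def)
  have F0: "F t \<ge> 0" for t by (simp add: F_def)
  have D0: "D k t \<ge> 0" for k t by (simp add: D_def)
  have E0: "E t \<ge> 0" for t by (simp add: E_def)
  have g2: "g\<^sup>2 \<ge> 0" by simp
  have R0: "R \<ge> 0" using Rpos by simp
  have R1: "D k (Suc t) + g * F t \<le> D k t + g * F k + g\<^sup>2 * (R * F t)" if "k \<le> t" "t < T" for k t
  proof -
    have "ennreal (D k (Suc t) + g * F t) = ED T k (Suc t) + ennreal g * EQ T t"
      using that gp F0 D0 by (simp add: eD eF ennreal_plus ennreal_mult)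
    also have "\<dots> \<le> ED T k t + ennreal g * EQ T k + ennreal (g\<^sup>2) * (ennreal R * EQ T t)"
      by (rule A1) (use that in auto)
    also have "\<dots> = ennreal (D k t + g * F k + g\<^sup>2 * (R * F t))"
      using that gp F0 D0 R0 by (simp add: eD eF ennreal_plus ennreal_mult)
    finally show ?thesis using that gp F0 D0 R0 by (subst (asm) ennreal_le_iff) auto
  qed
  have R2: "E (Suc t) + 2 * g * F t \<le> E t + g\<^sup>2 * (R * F t)" if "t < T" for t
  proof -
    have "ennreal (E (Suc t) + 2 * g * F t) = EE T (Suc t) + ennreal (2*g) * EQ T t"
      using that gp F0 E0 by (simp add: eE eF ennreal_plus ennreal_mult)
    also have "\<dots> \<le> EE T t + ennreal (g\<^sup>2) * (ennreal R * EQ T t)"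
      by (rule A2) (use that in auto)
    also have "\<dots> = ennreal (E t + g\<^sup>2 * (R * F t))"
      using that gp F0 E0 R0 by (simp add: eE eF ennreal_plus ennreal_mult)
    finally show ?thesis using that gp F0 E0 R0 by (subst (asm) ennreal_le_iff) auto
  qed
  have R3: "g * F T \<le> D k T + g * F k + g\<^sup>2 * (R * F T)" if "k \<le> T" for k
  proof -
    have "ennreal (g * F T) = ennreal g * EQ T T"
      using that gp F0 by (simp add: eF ennreal_mult)
    also have "\<dots> \<le> ED T k T + ennreal g * EQ T k + ennreal (g\<^sup>2) * (ennreal R * EQ T T)"
      by (rule A3) (use that in auto)
    also have "\<dots> = ennreal (D k T + g * F k + g\<^sup>2 * (R * F T))"
      using that gp F0 D0 R0 by (simp add: eD eF ennreal_plus ennreal_mult)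
    finally show ?thesis using that gp F0 D0 R0 by (subst (asm) ennreal_le_iff) auto
  qed
  have R4: "2 * g * F T \<le> E T + g\<^sup>2 * (R * F T)"
  proof -
    have "ennreal (2 * g * F T) = ennreal (2*g) * EQ T T"
      using gp F0 by (simp add: eF ennreal_mult)
    also have "\<dots> \<le> EE T T + ennreal (g\<^sup>2) * (ennreal R * EQ T T)"
      by (rule A4)
    also have "\<dots> = ennreal (E T + g\<^sup>2 * (R * F T))"
      using gp F0 E0 R0 by (simp add: eE eF ennreal_plus ennreal_mult)
    finally show ?thesis using gp F0 E0 R0 by (subst (asm) ennreal_le_iff) auto
  qed
  have Dkk: "D k k = 0" for k by (simp add: D_def ED_def)
  have Ez: "E 0 = (norm ts)\<^sup>2" by (simp add: E_def EE0)
  have telD: "D k t + g * (\<Sum>i\<in>{k..<t}. F i) \<le> real (t - k) * g * F k + g\<^sup>2 * (R * (\<Sum>i\<in>{k..<t}. F i))"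
    if "k \<le> t" "t \<le> T" for k t
    using that
  proof (induction t rule: dec_induct)
    case base then show ?case by (simp add: Dkk)
  next
    case (step n)
    have "D k (Suc n) + g * (\<Sum>i\<in>{k..<Suc n}. F i) = (D k (Suc n) + g * F n) + g * (\<Sum>i\<in>{k..<n}. F i)"
      using step.hyps by (simp add: algebra_simps)
    also have "\<dots> \<le> (D k n + g * F k + g\<^sup>2 * (R * F n)) + g * (\<Sum>i\<in>{k..<n}. F i)"
      using R1[of k n] step by simp
    also have "\<dots> \<le> real (n - k) * g * F k + g\<^sup>2 * (R * (\<Sum>i\<in>{k..<n}. F i)) + g * F k + g\<^sup>2 * (R * F n)"
      using step by simp
    also have "\<dots> = real (Suc n - k) * g * F k + g\<^sup>2 * (R * (\<Sum>i\<in>{k..<Suc n}. F i))"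
      using step.hyps by (simp add: algebra_simps Suc_diff_le)
    finally show ?case .
  qed
  have telE: "E t + 2 * g * (\<Sum>i<t. F i) \<le> (norm ts)\<^sup>2 + g\<^sup>2 * (R * (\<Sum>i<t. F i))"
    if "t \<le> T" for t
    using that
  proof (induction t)
    case 0 then show ?case by (simp add: Ez)
  next
    case (Suc n)
    have "E (Suc n) + 2 * g * (\<Sum>i<Suc n. F i) = (E (Suc n) + 2 * g * F n) + 2 * g * (\<Sum>i<n. F i)"
      by (simp add: algebra_simps)
    also have "\<dots> \<le> (E n + g\<^sup>2 * (R * F n)) + 2 * g * (\<Sum>i<n. F i)"
      using R2[of n] Suc.prems by simp
    also have "\<dots> \<le> (norm ts)\<^sup>2 + g\<^sup>2 * (R * (\<Sum>i<n. F i)) + g\<^sup>2 * (R * F n)"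
      using Suc by simp
    also have "\<dots> = (norm ts)\<^sup>2 + g\<^sup>2 * (R * (\<Sum>i<Suc n. F i))"
      by (simp add: algebra_simps)
    finally show ?case .
  qed
  have star: "(1-a) * (\<Sum>t\<in>{k..T}. F t) \<le> (real (T-k) + 1) * F k" if "k \<le> T" for k
  proof -
    have sp: "(\<Sum>t\<in>{k..T}. F t) = (\<Sum>t\<in>{k..<T}. F t) + F T"
      using that by (simp add: atLeastLessThanSuc_atLeastAtMost[symmetric] sum.atLeastLessThan_Suc)
    have "g * (\<Sum>t\<in>{k..T}. F t) \<le> g * ((real (T-k) + 1) * F k) + g * (a * (\<Sum>t\<in>{k..T}. F t))"
      using telD[of k T] R3[of k] that D0[of k T] unfolding sp a_def power2_eq_square
      by (simp add: algebra_simps)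
    then have "g * ((1-a) * (\<Sum>t\<in>{k..T}. F t)) \<le> g * ((real (T-k) + 1) * F k)"
      by (simp add: algebra_simps)
    then show ?thesis using gp by simp
  qed
  have sumb: "(2 - a) * (\<Sum>t\<in>{0..T}. F t) \<le> (norm ts)\<^sup>2 / g"
  proof -
    have sp: "(\<Sum>t\<in>{0..T}. F t) = (\<Sum>t<T. F t) + F T"
      by (simp add: atLeastLessThanSuc_atLeastAtMost[symmetric] sum.atLeastLessThan_Suc atLeast0LessThan)
    have "g * ((2 - a) * (\<Sum>t\<in>{0..T}. F t)) \<le> (norm ts)\<^sup>2"
      using telE[of T] R4 E0[of T] unfolding sp a_def power2_eq_square
      by (simp add: algebra_simps)
    then show ?thesis using gp by (simp add: field_simps)
  qed
  have "F T \<le> (\<Prod>i<T. (1 + a/(real i + 1))) * ((\<Sum>t\<in>{0..T}. F t) / (real T + 1))"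
    by (rule LP[OF F0 a0]) (use a1 star in \<open>auto simp: a_def\<close>)
  also have "\<dots> \<le> (\<Prod>i<T. (1 + a/(real i + 1))) * (((norm ts)\<^sup>2 / (g * (2 - a))) / (real T + 1))"
  proof (intro mult_left_mono divide_right_mono)
    show "(\<Sum>t\<in>{0..T}. F t) \<le> (norm ts)\<^sup>2 / (g * (2 - a))"
      using sumb a1 gp unfolding a_def by (simp add: field_simps)
    show "0 \<le> (\<Prod>i<T. (1 + a/(real i + 1)))" using a0 by (intro prod_nonneg) auto
  qed auto
  finally have "F T \<le> (\<Prod>i<T. (1 + a/(real i + 1))) * ((norm ts)\<^sup>2 / (g * (2 - a))) / (real T + 1)"
    by simp
  then show ?thesis using eF[of T] unfolding a_def by (simp add: ennreal_leI)
qed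

end


lemma sgd_zero: "sgd 0 w t = 0"
  by (induction t) auto

theorem theorem1:
  fixes \<rho> :: "('a::{real_inner, complete_space, second_countable_topology} \<times> real) measure"
    and \<theta>star :: 'a and R :: real and T :: nat
  assumes prob: "prob_space \<rho>"
    and sets_rho: "sets \<rho> = sets borel"
    and cov_exists: "\<And>v. (\<integral>\<^sup>+ z. ennreal ((inner (fst z) v)^2) \<partial>\<rho>) < \<infinity>"
    and noiseless: "AE z in \<rho>. inner \<theta>star (fst z) = snd z"
    and R_nonneg: "R \<ge> 0"
    and fourth_moment: "\<And>v. (\<integral>\<^sup>+ z. ennreal ((norm (fst z))^2 * (inner (fst z) v)^2) \<partial>\<rho>)
                              \<le> ennreal R * (\<integral>\<^sup>+ z. ennreal ((inner (fst z) v)^2) \<partial>\<rho>)"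
    and T: "T \<ge> 2"
  shows "(\<integral>\<^sup>+ \<omega>. risk \<rho> (sgd (1 / (4 * R * ln (real T))) \<omega> T) \<partial>(PiM {..<T} (\<lambda>_. \<rho>)))
           \<le> ennreal (3 * R * (norm \<theta>star)^2 * ln (real T) / real T)"
proof (cases "R = 0")
  case True
  interpret L: sgdL \<rho> by (rule sgdL.intro) (fact prob, fact sets_rho)
  have m: "(\<lambda>z. ennreal ((norm (fst z))^2 * (inner (fst z) \<theta>star)^2)) \<in> borel_measurable \<rho>"
    by (rule L.rho_meas) measurable
  have "(\<integral>\<^sup>+ z. ennreal ((norm (fst z))^2 * (inner (fst z) \<theta>star)^2) \<partial>\<rho>) = 0"
    using fourth_moment[of \<theta>star] True by simp
  then have "AE z in \<rho>. ennreal ((norm (fst z))^2 * (inner (fst z) \<theta>star)^2) = 0"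
    using nn_integral_0_iff_AE[OF m] by simp
  then have ae0: "AE z in \<rho>. snd z = 0" using noiseless
    by eventually_elim (auto simp: inner_commute)
  have "risk \<rho> 0 = 0"
  proof -
    have "(\<integral>\<^sup>+ z. ennreal ((inner 0 (fst z) - snd z)^2) \<partial>\<rho>) = (\<integral>\<^sup>+ z. 0 \<partial>\<rho>)"
      by (rule nn_integral_cong_AE) (use ae0 in \<open>eventually_elim, simp\<close>)
    then show ?thesis unfolding risk_def by simp
  qed
  then show ?thesis using True by (simp add: sgd_zero)
next
  case False
  then have Rpos: "R > 0" using R_nonneg by simp
  define L where "L = ln (real T)"
  have Tr: "real T \<ge> 2" using T by simp
  have "ln (2::real) \<le> ln (real T)" using Tr by (subst ln_le_cancel_iff) auto
  then have L2: "L \<ge> 1/2" using ln2_ge unfolding L_def by linarith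
  define \<gamma> where "\<gamma> = 1 / (4 * R * L)"
  have gp: "\<gamma> > 0" using Rpos L2 by (simp add: \<gamma>_def)
  define a where "a = \<gamma> * R"
  have a_eq: "a = 1 / (4 * L)" using Rpos by (simp add: a_def \<gamma>_def)
  have a0: "a \<ge> 0" using L2 by (simp add: a_eq)
  have ahalf: "a \<le> 1/2" using L2 by (simp add: a_eq field_simps)
  interpret S: sgdM \<rho> \<theta>star R \<gamma>
    by (intro sgdM.intro sgdL.intro sgdM_axioms.intro) (use prob sets_rho cov_exists noiseless Rpos fourth_moment gp in auto)
  have mt: "(\<lambda>w. S.Q (sgd \<gamma> w T)) \<in> borel_measurable (S.MM T)"
    using measurable_compose[OF S.th_meas[of T T] S.Q_meas] by simp
  have lhs: "(\<integral>\<^sup>+ w. risk \<rho> (sgd \<gamma> w T) \<partial>S.MM T) = (1/2) * S.EQ T T"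
    unfolding S.risk_Q S.EQ_def using mt by (simp add: nn_integral_cmult)
  define P where "P = (\<Prod>i<T. (1 + a/(real i + 1)))"
  have P0: "P \<ge> 0" unfolding P_def using a0 by (intro prod_nonneg) auto
  have "P \<le> (1 + a) * exp (a * ln (real T))" unfolding P_def by (rule prod_bound) (use a0 T in auto)
  also have "a * ln (real T) = 1/4" using L2 by (simp add: a_eq L_def[symmetric])
  also have "(1 + a) * exp (1/4) \<le> (3/2) * (4/3)"
    using ahalf a0 exp_quarter by (intro mult_mono) auto
  finally have P2: "P \<le> 2" by simp
  define n where "n = (norm \<theta>star)\<^sup>2"
  have n0: "n \<ge> 0" by (simp add: n_def)
  have "(1/2) * (P * (n / (\<gamma> * (2 - a))) / (real T + 1)) \<le> (1/2) * (2 * (n / (\<gamma> * (2 - a))) / (real T + 1))"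
    using P2 n0 gp ahalf by (intro mult_left_mono divide_right_mono mult_right_mono) auto
  also have "\<dots> = 4 * (R * L) * n / ((2 - a) * (real T + 1))"
    using Rpos L2 ahalf by (simp add: \<gamma>_def field_simps)
  also have "\<dots> \<le> 3 * (R * L) * n / real T"
  proof -
    have h1: "(9/2) * (real T + 1) \<le> (3 * (2 - a)) * (real T + 1)" using ahalf Tr by (intro mult_right_mono) auto
    have h2: "4 * real T \<le> (9/2) * (real T + 1)" using Tr by simp
    have "4 * real T \<le> 3 * (2 - a) * (real T + 1)" using order.trans[OF h2 h1] by simp
    moreover have "R * L * n \<ge> 0" using Rpos L2 n0 by simp
    ultimately have "(R * L * n) * (4 * real T) \<le> (R * L * n) * (3 * (2 - a) * (real T + 1))"
      by (intro mult_left_mono)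
    then have "4 * (R * L) * n * real T \<le> 3 * (R * L) * n * ((2 - a) * (real T + 1))"
      by (simp add: algebra_simps)
    then have d: "(4 * (R * L) * n * real T) / (((2 - a) * (real T + 1)) * real T)
        \<le> (3 * (R * L) * n * ((2 - a) * (real T + 1))) / (((2 - a) * (real T + 1)) * real T)"
      using ahalf Tr by (intro divide_right_mono) auto
    have e1: "4 * (R * L) * n / ((2 - a) * (real T + 1)) = (4 * (R * L) * n * real T) / (((2 - a) * (real T + 1)) * real T)"
      using Tr by (intro nonzero_mult_divide_mult_cancel_right[symmetric]) auto
    have c: "((2 - a) * (real T + 1)) * real T = real T * ((2 - a) * (real T + 1))" by (rule mult.commute)
    have e2: "(3 * (R * L) * n * ((2 - a) * (real T + 1))) / (real T * ((2 - a) * (real T + 1))) = 3 * (R * L) * n / real T"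
      using Tr ahalf by (intro nonzero_mult_divide_mult_cancel_right) auto
    show ?thesis unfolding e1 using d unfolding c e2 .
  qed
  finally have fin: "(1/2) * (P * (n / (\<gamma> * (2 - a))) / (real T + 1)) \<le> 3 * (R * L) * n / real T" .
  have "(\<integral>\<^sup>+ w. risk \<rho> (sgd \<gamma> w T) \<partial>S.MM T) \<le> (1/2) * ennreal (P * (n / (\<gamma> * (2 - a))) / (real T + 1))"
    unfolding lhs using S.main_bound[OF gp] ahalf unfolding a_def P_def n_def
    by (intro mult_left_mono) auto
  also have "\<dots> = ennreal ((1/2) * (P * (n / (\<gamma> * (2 - a))) / (real T + 1)))"
  proof -
    have "ennreal 1 / 2 = ennreal (1/2)" by (rule ennreal_divide_numeral) simp
    then have "(1/2::ennreal) = ennreal (1/2)" by (simp only: ennreal_1)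
    moreover have "ennreal ((1/2) * (P * (n / (\<gamma> * (2 - a))) / (real T + 1)))
       = ennreal (1/2) * ennreal (P * (n / (\<gamma> * (2 - a))) / (real T + 1))"
      by (rule ennreal_mult') simp
    ultimately show ?thesis by (simp only:)
  qed
  also have "\<dots> \<le> ennreal (3 * (R * L) * n / real T)" using fin by (rule ennreal_leI)
  also have "3 * (R * L) * n / real T = 3 * R * (norm \<theta>star)^2 * ln (real T) / real T"
    unfolding L_def n_def by (simp only: mult_ac)
  finally show ?thesis unfolding \<gamma>_def L_def .
qed

end
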